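(* Let $\mathcal F|\mathcal G$ be a biflag with biflats indexed $F_1|G_1,\dots,F_k|G_k$ so that $F_1\subseteq\cdots\subseteq F_k$, $G_1\supseteq\cdots\supseteq G_k$, with $G_{k+1}=\emptyset$, and let $l$ be the largest index with $F_l\neq E$ ($l=0$ and $F_0=\emptyset$, $G_0=E$ if there is none). If $c\in E$ and $c\notin F_l$, then in $A_{M,M^\perp}$ \[ x_{\mathcal F|\mathcal G}\,\gamma_c=\sum_{F|G}x_{\mathcal F|\mathcal G\,\cup\,\{F|G\}}, \] the sum over biflats $F|G$ with $F_l\cup\{c\}\subseteq F\subsetneq E$ and $G_l\supseteq G\supseteq G_{l+1}$ (terms for which $\mathcal F|\mathcal G\cup\{F|G\}$ is not a biflag being zero).
   Context: Let $M$ be a matroid with no loops and no coloops on the ground set $E=\{0,1,\dots,n\}$; $M^\perp$ its dual. A biflat of $M$ is a pair $F|G$ where $F$ is a flat of $M$, $G$ is a flat of $M^\perp$, both are nonempty, they are not both equal to $E$, and $F\cup G=E$. Two biflats $F|G$, $F'|G'$ are compatible if ($F\subseteq F'$ and $G\supseteq G'$) or ($F\supseteq F'$ and $G\subseteq G'$). A biflag is a set of pairwise compatible biflats with $\bigcup_{F|G}(F\cap G)\neq E$. Conormal Chow ring: $S$ is the polynomial ring over $\mathbb R$ in variables $x_{F|G}$, one per biflat; $x_{\mathcal F|\mathcal G}=\prod_{F|G\in\mathcal F|\mathcal G}x_{F|G}$ for a set of biflats. For $i\in E$, $\gamma_i=\sum_{i\in F,\,F\neq E}x_{F|G}$, $\bar\gamma_i=\sum_{i\in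 G,\,G\neq E}x_{F|G}$. $I$ is generated by the $x_{\mathcal F|\mathcal G}$ for sets of biflats that are not biflags, $J$ by all $\gamma_i-\gamma_j$, $\bar\gamma_i-\bar\gamma_j$; $A_{M,M^\perp}=S/(I+J)$. *)

theory Defs
  imports Complex_Main "HOL-Library.Poly_Mapping"
begin

definition matroid_bases :: "'a set \<Rightarrow> 'a set set \<Rightarrow> bool" where
  "matroid_bases E \<B> \<longleftrightarrow> finite E \<and> \<B> \<noteq> {} \<and> (\<forall>B\<in>\<B>. B \<subseteq> E) \<and>
     (\<forall>B1\<in>\<B>. \<forall>B2\<in>\<B>. \<forall>x\<in>B1 - B2. \<exists>y\<in>B2 - B1. insert y (B1 - {x}) \<in> \<B>)"

definition dual_bases :: "'a set \<Rightarrow> 'a set set \<Rightarrow> 'a set set" where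
  "dual_bases E \<B> = (\<lambda>B. E - B) ` \<B>"

definition mrank :: "'a set set \<Rightarrow> 'a set \<Rightarrow> nat" where
  "mrank \<B> X = Max ((\<lambda>B. card (X \<inter> B)) ` \<B>)"

definition is_flat :: "'a set \<Rightarrow> 'a set set \<Rightarrow> 'a set \<Rightarrow> bool" where
  "is_flat E \<B> X \<longleftrightarrow> X \<subseteq> E \<and> (\<forall>e\<in>E - X. mrank \<B> (insert e X) > mrank \<B> X)"

definition is_loop :: "'a set set \<Rightarrow> 'a \<Rightarrow> bool" where
  "is_loop \<B> e \<longleftrightarrow> (\<forall>B\<in>\<B>. e \<notin> B)"

definition is_coloop :: "'a set set \<Rightarrow> 'a \<Rightarrow> bool" where
  "is_coloop \<B> e \<longleftrightarrow> (\<forall>B\<in>\<B>. e \<in> B)"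

text \<open>A biflat F|G is represented as the pair (F, G).\<close>

definition is_biflat :: "'a set \<Rightarrow> 'a set set \<Rightarrow> 'a set \<times> 'a set \<Rightarrow> bool" where
  "is_biflat E \<B> p \<longleftrightarrow> is_flat E \<B> (fst p) \<and> is_flat E (dual_bases E \<B>) (snd p) \<and>
     fst p \<noteq> {} \<and> snd p \<noteq> {} \<and> \<not> (fst p = E \<and> snd p = E) \<and> fst p \<union> snd p = E"

definition biflats :: "'a set \<Rightarrow> 'a set set \<Rightarrow> ('a set \<times> 'a set) set" where
  "biflats E \<B> = {p. is_biflat E \<B> p}"

definition compatible :: "'a set \<times> 'a set \<Rightarrow> 'a set \<times> 'a set \<Rightarrow> bool" where
  "compatible p q \<longleftrightarrow> (fst p \<subseteq> fst q \<and> snd p \<supseteq> snd q) \<or> (fst p \<supseteq> fst q \<and> snd p \<subseteq> snd q)"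

definition is_biflag :: "'a set \<Rightarrow> 'a set set \<Rightarrow> ('a set \<times> 'a set) set \<Rightarrow> bool" where
  "is_biflag E \<B> S \<longleftrightarrow> S \<subseteq> biflats E \<B> \<and> (\<forall>p\<in>S. \<forall>q\<in>S. compatible p q) \<and>
     (\<Union>p\<in>S. fst p \<inter> snd p) \<noteq> E"

text \<open>Polynomials over the reals in variables indexed by biflats:
  coefficient functions on monomials (exponent vectors).\<close>

type_synonym 'a cpoly = "(('a set \<times> 'a set) \<Rightarrow>\<^sub>0 nat) \<Rightarrow>\<^sub>0 real"

definition var :: "'a set \<times> 'a set \<Rightarrow> 'a cpoly" where
  "var p = Poly_Mapping.single (Poly_Mapping.single p 1) 1"

definition xprod :: "('a set \<times> 'a set) set \<Rightarrow> 'a cpoly" where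
  "xprod S = (\<Prod>p\<in>S. var p)"

definition gamma :: "'a set \<Rightarrow> 'a set set \<Rightarrow> 'a \<Rightarrow> 'a cpoly" where
  "gamma E \<B> i = (\<Sum>p\<in>{p\<in>biflats E \<B>. i \<in> fst p \<and> fst p \<noteq> E}. var p)"

definition gamma_bar :: "'a set \<Rightarrow> 'a set set \<Rightarrow> 'a \<Rightarrow> 'a cpoly" where
  "gamma_bar E \<B> i = (\<Sum>p\<in>{p\<in>biflats E \<B>. i \<in> snd p \<and> snd p \<noteq> E}. var p)"

definition ideal_gen :: "'r::comm_ring_1 set \<Rightarrow> 'r set" where
  "ideal_gen X = {f. \<exists>T c. finite T \<and> T \<subseteq> X \<and> f = (\<Sum>t\<in>T. c t * t)}"

definition gens_I :: "'a set \<Rightarrow> 'a set set \<Rightarrow> 'a cpoly set" where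
  "gens_I E \<B> = {xprod S | S. S \<subseteq> biflats E \<B> \<and> \<not> is_biflag E \<B> S}"

definition gens_J :: "'a set \<Rightarrow> 'a set set \<Rightarrow> 'a cpoly set" where
  "gens_J E \<B> = {gamma E \<B> i - gamma E \<B> j | i j. i \<in> E \<and> j \<in> E}
              \<union> {gamma_bar E \<B> i - gamma_bar E \<B> j | i j. i \<in> E \<and> j \<in> E}"

definition IJ :: "'a set \<Rightarrow> 'a set set \<Rightarrow> 'a cpoly set" where
  "IJ E \<B> = ideal_gen (gens_I E \<B> \<union> gens_J E \<B>)"

text \<open>Equality in the conormal Chow ring A = S/(I+J).\<close>

definition eq_in_A :: "'a set \<Rightarrow> 'a set set \<Rightarrow> 'a cpoly \<Rightarrow> 'a cpoly \<Rightarrow> bool" where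
  "eq_in_A E \<B> f g \<longleftrightarrow> f - g \<in> IJ E \<B>"

end

theory Submission
  imports Defs
begin

lemma sum_in_ideal_gen:
  assumes "finite P" "\<forall>p\<in>P. g p \<in> X"
  shows "(\<Sum>p\<in>P. g p) \<in> ideal_gen (X::'r::comm_ring_1 set)"
proof -
  have "(\<Sum>p\<in>P. g p) = (\<Sum>t\<in>g ` P. (\<Sum>p\<in>{x\<in>P. g x = t}. g p))"
    by (rule sum.image_gen[OF assms(1)])
  also have "\<dots> = (\<Sum>t\<in>g ` P. of_nat (card {x\<in>P. g x = t}) * t)"
  proof (rule sum.cong[OF refl])
    fix t assume "t \<in> g ` P"
    have "(\<Sum>p\<in>{x\<in>P. g x = t}. g p) = (\<Sum>p\<in>{x\<in>P. g x = t}. t)"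
      by (rule sum.cong[OF refl]) simp
    then show "(\<Sum>p\<in>{x\<in>P. g x = t}. g p) = of_nat (card {x\<in>P. g x = t}) * t"
      by simp
  qed
  finally have eq: "(\<Sum>p\<in>P. g p) = (\<Sum>t\<in>g ` P. of_nat (card {x\<in>P. g x = t}) * t)" .
  have "finite (g ` P)" "g ` P \<subseteq> X" using assms by auto
  then have "finite (g ` P) \<and> g ` P \<subseteq> X \<and> (\<Sum>p\<in>P. g p) = (\<Sum>t\<in>g ` P. (\<lambda>t. of_nat (card {x\<in>P. g x = t})) t * t)"
    using eq by simp
  then show ?thesis unfolding ideal_gen_def mem_Collect_eq by (intro exI)
qed

theorem mainTheorem9:
  fixes n k l :: nat and \<B> :: "nat set set" and Fs Gs :: "nat \<Rightarrow> nat set"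
    and FG :: "(nat set \<times> nat set) set" and c :: nat
  defines "E \<equiv> {0..n}"
  assumes M: "matroid_bases E \<B>"
    and no_loops: "\<forall>e\<in>E. \<not> is_loop \<B> e"
    and no_coloops: "\<forall>e\<in>E. \<not> is_coloop \<B> e"
    and biflag: "is_biflag E \<B> FG"
    and FG_idx: "FG = (\<lambda>i. (Fs i, Gs i)) ` {1..k}"
    and inj: "inj_on (\<lambda>i. (Fs i, Gs i)) {1..k}"
    and F_mono: "\<forall>i j. 1 \<le> i \<and> i \<le> j \<and> j \<le> k \<longrightarrow> Fs i \<subseteq> Fs j"
    and G_anti: "\<forall>i j. 1 \<le> i \<and> i \<le> j \<and> j \<le> k \<longrightarrow> Gs j \<subseteq> Gs i"
    and F0: "Fs 0 = {}" and G0: "Gs 0 = E" and Gk1: "Gs (Suc k) = {}"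
    and l_le: "l \<le> k"
    and l_largest: "(l = 0 \<or> Fs l \<noteq> E) \<and> (\<forall>i. l < i \<and> i \<le> k \<longrightarrow> Fs i = E)"
    and c: "c \<in> E" "c \<notin> Fs l"
  shows "eq_in_A E \<B> (xprod FG * gamma E \<B> c)
           (\<Sum>p\<in>{p\<in>biflats E \<B>. insert c (Fs l) \<subseteq> fst p \<and> fst p \<noteq> E
                                  \<and> Gs (Suc l) \<subseteq> snd p \<and> snd p \<subseteq> Gs l}.
              xprod (insert p FG))"
proof -
  define S1 where "S1 = {p\<in>biflats E \<B>. c \<in> fst p \<and> fst p \<noteq> E}"
  define S2 where "S2 = {p\<in>biflats E \<B>. insert c (Fs l) \<subseteq> fst p \<and> fst p \<noteq> E
                                  \<and> Gs (Suc l) \<subseteq> snd p \<and> snd p \<subseteq> Gs l}"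
  have finE: "finite E" unfolding E_def by simp
  have bsub: "biflats E \<B> \<subseteq> Pow E \<times> Pow E"
  proof
    fix p assume "p \<in> biflats E \<B>"
    then have "fst p \<union> snd p = E" by (simp add: biflats_def is_biflat_def)
    then show "p \<in> Pow E \<times> Pow E" by (cases p) auto
  qed
  have finB: "finite (biflats E \<B>)"
    using finite_subset[OF bsub] finE by auto
  have finS1: "finite S1" unfolding S1_def using finB by simp
  have S21: "S2 \<subseteq> S1" unfolding S1_def S2_def by auto
  have finFG: "finite FG" using FG_idx by simp
  have FGb: "FG \<subseteq> biflats E \<B>" using biflag unfolding is_biflag_def by simp
  have notin: "p \<notin> FG" if "p \<in> S1" for p
  proof
    assume "p \<in> FG"
    then obtain i where i: "1 \<le> i" "i \<le> k" "p = (Fs i, Gs i)" using FG_idx by auto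
    show False
    proof (cases "l < i")
      case True then show False using l_largest i that unfolding S1_def by auto
    next
      case False
      then have "Fs i \<subseteq> Fs l" using F_mono i l_le by auto
      then show False using c that i unfolding S1_def by auto
    qed
  qed
  have lhs: "xprod FG * gamma E \<B> c = (\<Sum>p\<in>S1. xprod (insert p FG))"
  proof -
    have "xprod FG * gamma E \<B> c = (\<Sum>p\<in>S1. xprod FG * var p)"
      unfolding gamma_def S1_def[symmetric] by (rule sum_distrib_left)
    also have "\<dots> = (\<Sum>p\<in>S1. xprod (insert p FG))"
    proof (rule sum.cong[OF refl])
      fix p assume "p \<in> S1"
      then show "xprod FG * var p = xprod (insert p FG)"
        using prod.insert[OF finFG notin[OF \<open>p \<in> S1\<close>], of var]
        by (simp add: xprod_def mult.commute)
    qed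
    finally show ?thesis .
  qed
  have notbf: "\<not> is_biflag E \<B> (insert p FG)" if p: "p \<in> S1 - S2" for p
  proof
    assume bf: "is_biflag E \<B> (insert p FG)"
    have comp: "compatible p q" if "q \<in> FG" for q using bf that unfolding is_biflag_def by auto
    have pb: "p \<in> biflats E \<B>" and cp: "c \<in> fst p" and pE: "fst p \<noteq> E" using p unfolding S1_def by auto
    have psub: "fst p \<subseteq> E" "snd p \<subseteq> E" using subsetD[OF bsub pb] by (auto simp: mem_Times_iff)
    have third: "Gs (Suc l) \<subseteq> snd p"
    proof (cases "l = k")
      case True then show ?thesis using Gk1 by simp
    next
      case False
      then have q: "(Fs (Suc l), Gs (Suc l)) \<in> FG" using FG_idx l_le by auto
      have "Fs (Suc l) = E" using l_largest False l_le by auto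
      then show ?thesis using comp[OF q] psub pE unfolding compatible_def by auto
    qed
    have first: "Fs l \<subseteq> fst p \<and> snd p \<subseteq> Gs l"
    proof (cases "l = 0")
      case True then show ?thesis using F0 G0 psub by simp
    next
      case False
      then have q: "(Fs l, Gs l) \<in> FG" using FG_idx l_le by auto
      show ?thesis using comp[OF q] cp c unfolding compatible_def by auto
    qed
    have "p \<in> S2" using first third pb cp pE unfolding S2_def by auto
    then show False using p by simp
  qed
  have diff: "(\<Sum>p\<in>S1. xprod (insert p FG)) - (\<Sum>p\<in>S2. xprod (insert p FG))
      = (\<Sum>p\<in>S1 - S2. xprod (insert p FG))"
    by (rule sum_diff[OF finS1 S21, symmetric])
  have mem: "(\<Sum>p\<in>S1 - S2. xprod (insert p FG)) \<in> IJ E \<B>"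
    unfolding IJ_def
  proof (rule sum_in_ideal_gen)
    show "finite (S1 - S2)" using finS1 by simp
    show "\<forall>p\<in>S1 - S2. xprod (insert p FG) \<in> gens_I E \<B> \<union> gens_J E \<B>"
    proof
      fix p assume p: "p \<in> S1 - S2"
      have "insert p FG \<subseteq> biflats E \<B>" using p FGb unfolding S1_def by auto
      then show "xprod (insert p FG) \<in> gens_I E \<B> \<union> gens_J E \<B>"
        using notbf[OF p] unfolding gens_I_def by blast
    qed
  qed
  show ?thesis unfolding eq_in_A_def lhs S2_def[symmetric] diff by (rule mem)
qed

end
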